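(* Let $L$ be a $\kappa$-frame. The following are equivalent: (1) $L$ is d-reduced; (2) the map $g\colon L\to \mathfrak{H}_\kappa L/\mathfrak{D}_{\mathfrak{H}_\kappa L}$, $a\mapsto[\downarrow a]$ (the composite of $a\mapsto\downarrow a$ with the quotient map) is injective; (3) $L$ is isomorphic to a sub-$\kappa$-frame of some Boolean frame $B$ (a subset closed under finite meets and joins of subsets of cardinality $<\kappa$ computed in $B$) which generates $B$ under arbitrary joins.
   Context: $\kappa$ is a fixed regular cardinal; a $\kappa$-frame is a bounded distributive lattice having joins of all subsets of cardinality $<\kappa$ and satisfying the frame distributive law for such joins; a frame is a complete lattice satisfying the infinite distributive law, and a Boolean frame is a complete Boolean algebra. A $\kappa$-ideal is a downset in which every subset of cardinality $<\kappa$ has an upper bound; $\mathfrak{H}_\kappa L$ is the frame of $\kappa$-ideals under inclusion; $\downarrow a=\{x\mid x\le a\}$. For a $\kappa$-frame (or frame) $M$, $\mathfrak{D}_M=\{(a,b)\mid\forall x\in M:\ a\wedge x=0\iff b\wedge x=0\}$, a congruence (equivalence relation that is a sub-$\kappa$-frame, resp. subframe, of $M\times M$); $M/\mathfrak{D}_M$ is the quotient. $M$ is d-reduced if $\mathfrak{D}_M$ is the diagonal. *)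

theory Defs
  imports Main
begin

(* kappa is represented by a cardinal order relation k (on some type 'k);
   a set S is "of cardinality < kappa" iff |S| <o k. *)
definition small :: "'k rel \<Rightarrow> 'x set \<Rightarrow> bool" where
  "small k S \<longleftrightarrow> (card_of S, k) \<in> ordLess"

definition regular_cardinal :: "'k rel \<Rightarrow> bool" where
  "regular_cardinal k \<longleftrightarrow> Card_order k \<and> Cinfinite k \<and> regularCard k"

definition is_lub_on :: "'b set \<Rightarrow> ('b \<Rightarrow> 'b \<Rightarrow> bool) \<Rightarrow> 'b set \<Rightarrow> 'b \<Rightarrow> bool" where
  "is_lub_on C le T x \<longleftrightarrow> x \<in> C \<and> (\<forall>t\<in>T. le t x) \<and>
      (\<forall>y\<in>C. (\<forall>t\<in>T. le t y) \<longrightarrow> le x y)"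

definition is_glb_on :: "'b set \<Rightarrow> ('b \<Rightarrow> 'b \<Rightarrow> bool) \<Rightarrow> 'b set \<Rightarrow> 'b \<Rightarrow> bool" where
  "is_glb_on C le T x \<longleftrightarrow> x \<in> C \<and> (\<forall>t\<in>T. le x t) \<and>
      (\<forall>y\<in>C. (\<forall>t\<in>T. le y t) \<longrightarrow> le y x)"

definition kappa_frame :: "'k rel \<Rightarrow> 'a::{bounded_lattice,distrib_lattice} itself \<Rightarrow> bool" where
  "kappa_frame k _ \<longleftrightarrow>
     (\<forall>S::'a set. small k S \<longrightarrow> (\<exists>x. is_lub_on UNIV (\<le>) S x)) \<and>
     (\<forall>(a::'a) S x. small k S \<longrightarrow> is_lub_on UNIV (\<le>) S x \<longrightarrow>
         is_lub_on UNIV (\<le>) ((\<lambda>s. inf a s) ` S) (inf a x))"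

definition kappa_ideal :: "'k rel \<Rightarrow> 'a::order set \<Rightarrow> bool" where
  "kappa_ideal k I \<longleftrightarrow> (\<forall>x y. x \<in> I \<longrightarrow> y \<le> x \<longrightarrow> y \<in> I) \<and>
     (\<forall>S. S \<subseteq> I \<longrightarrow> small k S \<longrightarrow> (\<exists>u\<in>I. \<forall>s\<in>S. s \<le> u))"

definition Hk :: "'k rel \<Rightarrow> 'a::order set set" where
  "Hk k = {I. kappa_ideal k I}"

definition Drel :: "'b set \<Rightarrow> ('b \<Rightarrow> 'b \<Rightarrow> 'b) \<Rightarrow> 'b \<Rightarrow> ('b \<times> 'b) set" where
  "Drel C meet z = {(a, b). a \<in> C \<and> b \<in> C \<and>
      (\<forall>x\<in>C. meet a x = z \<longleftrightarrow> meet b x = z)}"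

definition DL :: "('a::{bounded_lattice} \<times> 'a) set" where
  "DL = Drel UNIV inf bot"

definition d_reduced :: "'a::bounded_lattice itself \<Rightarrow> bool" where
  "d_reduced _ \<longleftrightarrow> (DL :: ('a \<times> 'a) set) = Id"

(* D on H_kappa L: meet is intersection, bottom is the ideal {0} = down 0 *)
definition DH :: "'k rel \<Rightarrow> ('a::bounded_lattice set \<times> 'a set) set" where
  "DH k = Drel (Hk k) (\<inter>) {bot}"

definition gmap :: "'k rel \<Rightarrow> 'a::bounded_lattice \<Rightarrow> 'a set set" where
  "gmap k a = DH k `` {{x. x \<le> a}}"

definition boolean_frame :: "'b set \<Rightarrow> ('b \<Rightarrow> 'b \<Rightarrow> bool) \<Rightarrow> bool" where
  "boolean_frame B le \<longleftrightarrow>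
     (\<forall>x\<in>B. le x x) \<and>
     (\<forall>x\<in>B. \<forall>y\<in>B. le x y \<longrightarrow> le y x \<longrightarrow> x = y) \<and>
     (\<forall>x\<in>B. \<forall>y\<in>B. \<forall>z\<in>B. le x y \<longrightarrow> le y z \<longrightarrow> le x z) \<and>
     (\<forall>T\<subseteq>B. \<exists>s. is_lub_on B le T s) \<and>
     (\<forall>a\<in>B. \<forall>T\<subseteq>B. \<forall>s m. is_lub_on B le T s \<longrightarrow> is_glb_on B le {a, s} m \<longrightarrow>
        is_lub_on B le {c. \<exists>t\<in>T. is_glb_on B le {a, t} c} m) \<and>
     (\<forall>a\<in>B. \<exists>c\<in>B. is_glb_on B le {a, c} (THE z. is_lub_on B le {} z) \<and>
                     is_lub_on B le {a, c} (THE z. is_glb_on B le {} z))"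

definition sub_kappa_frame :: "'k rel \<Rightarrow> 'b set \<Rightarrow> ('b \<Rightarrow> 'b \<Rightarrow> bool) \<Rightarrow> 'b set \<Rightarrow> bool" where
  "sub_kappa_frame k B le S \<longleftrightarrow> S \<subseteq> B \<and>
     (\<forall>T\<subseteq>S. finite T \<longrightarrow> (\<forall>x. is_glb_on B le T x \<longrightarrow> x \<in> S)) \<and>
     (\<forall>T\<subseteq>S. small k T \<longrightarrow> (\<forall>x. is_lub_on B le T x \<longrightarrow> x \<in> S))"

definition join_generates :: "'b set \<Rightarrow> ('b \<Rightarrow> 'b \<Rightarrow> bool) \<Rightarrow> 'b set \<Rightarrow> bool" where
  "join_generates B le S \<longleftrightarrow> (\<forall>b\<in>B. \<exists>T\<subseteq>S. is_lub_on B le T b)"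

(* L is isomorphic to a join-generating sub-kappa-frame of the Boolean frame (B, le);
   the isomorphism is an order isomorphism f : L -> S (hence a lattice/kappa-frame iso) *)
definition embeds_in_boolean :: "'k rel \<Rightarrow> 'a::order itself \<Rightarrow> 'b set \<Rightarrow> ('b \<Rightarrow> 'b \<Rightarrow> bool) \<Rightarrow> bool" where
  "embeds_in_boolean k _ B le \<longleftrightarrow> boolean_frame B le \<and>
     (\<exists>S (f::'a \<Rightarrow> 'b). sub_kappa_frame k B le S \<and> join_generates B le S \<and>
        bij_betw f UNIV S \<and> (\<forall>x y. le (f x) (f y) \<longleftrightarrow> x \<le> y))"

end

theory Submission
  imports Defs
begin

definition perp :: "'a::bounded_lattice set \<Rightarrow> 'a set" where
  "perp X = {y. \<forall>x\<in>X. inf x y = bot}"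

lemma perp_anti: "X \<subseteq> Y \<Longrightarrow> perp Y \<subseteq> perp X"
  unfolding perp_def by auto

lemma pp_ext: "X \<subseteq> perp (perp X)"
  unfolding perp_def by (auto simp: inf_commute)

lemma ppp: "perp (perp (perp X)) = perp X"
  by (meson antisym perp_anti pp_ext)

lemma perp_down: "x \<in> perp X \<Longrightarrow> y \<le> x \<Longrightarrow> y \<in> perp X"
  unfolding perp_def
  by (auto, metis bot_unique inf_mono order_refl)

lemma perpD: "z \<in> perp P \<Longrightarrow> v \<in> P \<Longrightarrow> inf v z = bot"
  unfolding perp_def by auto

lemma perpI: "(\<And>v. v \<in> P \<Longrightarrow> inf v z = bot) \<Longrightarrow> z \<in> perp P"
  unfolding perp_def by auto

lemma bot_perp: "bot \<in> perp X"
  unfolding perp_def by auto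

lemma perp_UNIV: "perp (UNIV::'a::bounded_lattice set) = {bot}"
  unfolding perp_def by (auto, metis inf.idem)

lemma perp_botset: "perp {bot::'a::bounded_lattice} = UNIV"
  unfolding perp_def by auto

lemma perp_empty: "perp {} = UNIV"
  unfolding perp_def by auto

lemma perp_Union: "perp (\<Union> XX) = \<Inter> (perp ` XX)"
  unfolding perp_def by auto

lemma perp_Union_pp: "perp (\<Union> (perp ` perp ` XX)) = perp (\<Union> XX)"
  unfolding perp_Union by (simp add: ppp image_image)

definition RR :: "'a::bounded_lattice set set" where
  "RR = {X. perp (perp X) = X}"

lemma RR_perp: "perp X \<in> RR"
  unfolding RR_def by (simp add: ppp)

lemma RR_Inter: "TT \<subseteq> RR \<Longrightarrow> \<Inter> TT \<in> RR"
proof -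
  assume a: "TT \<subseteq> RR"
  have "\<Inter> TT = \<Inter> ((\<lambda>X. perp (perp X)) ` TT)"
    using a unfolding RR_def by (intro arg_cong[where f=Inter]) force
  also have "\<dots> = perp (\<Union> (perp ` TT))" by (simp add: perp_Union image_image)
  finally show ?thesis by (simp add: RR_perp)
qed

lemma RR_down: "A \<in> RR \<Longrightarrow> z \<in> A \<Longrightarrow> y \<le> z \<Longrightarrow> y \<in> A"
proof -
  assume a: "A \<in> RR" "z \<in> A" "y \<le> z"
  hence e: "perp (perp A) = A" unfolding RR_def by simp
  have "y \<in> perp (perp A)" by (rule perp_down[of z]) (use a e in auto)
  thus ?thesis using e by simp
qed

lemma RR_distrib:
  assumes A: "A \<in> RR" and T: "TT \<subseteq> RR"
  shows "A \<inter> perp (perp (\<Union> TT)) = perp (perp (\<Union> ((\<lambda>t. A \<inter> t) ` TT)))"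
proof
  have "perp (perp (\<Union> ((\<lambda>t. A \<inter> t) ` TT))) \<subseteq> perp (perp A)"
    by (intro perp_anti) auto
  moreover have "perp (perp (\<Union> ((\<lambda>t. A \<inter> t) ` TT))) \<subseteq> perp (perp (\<Union> TT))"
    by (intro perp_anti) auto
  ultimately show "perp (perp (\<Union> ((\<lambda>t. A \<inter> t) ` TT))) \<subseteq> A \<inter> perp (perp (\<Union> TT))"
    using A unfolding RR_def by auto
next
  show "A \<inter> perp (perp (\<Union> TT)) \<subseteq> perp (perp (\<Union> ((\<lambda>t. A \<inter> t) ` TT)))"
  proof
    fix z assume z: "z \<in> A \<inter> perp (perp (\<Union> TT))"
    show "z \<in> perp (perp (\<Union> ((\<lambda>t. A \<inter> t) ` TT)))"
    proof (rule perpI)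
      fix w assume w: "w \<in> perp (\<Union> ((\<lambda>t. A \<inter> t) ` TT))"
      have "inf z w \<in> perp (\<Union> TT)"
      proof (rule perpI)
        fix y assume "y \<in> \<Union> TT"
        then obtain t where t: "t \<in> TT" "y \<in> t" by auto
        have "inf z y \<in> A" by (rule RR_down[OF A, of z]) (use z in auto)
        moreover have "inf z y \<in> t" by (rule RR_down[of t y]) (use t T in auto)
        ultimately have "inf (inf z y) w = bot" using t by (intro perpD[OF w]) blast
        thus "inf y (inf z w) = bot" by (metis inf.assoc inf.commute)
      qed
      hence "inf (inf z w) z = bot" using z by (intro perpD[of z "perp (\<Union> TT)"]) auto
      thus "inf w z = bot" by (simp add: inf_commute inf_left_commute)
    qed
  qed
qed

lemma RR_bot: "A \<in> RR \<Longrightarrow> bot \<in> A"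
proof -
  assume a: "A \<in> RR"
  hence e: "perp (perp A) = A" unfolding RR_def by simp
  show ?thesis using bot_perp[of "perp A"] e by simp
qed

lemma RR_compl1: "A \<in> RR \<Longrightarrow> A \<inter> perp A = {bot}"
proof -
  assume a: "A \<in> RR"
  have "x = bot" if "x \<in> A" "x \<in> perp A" for x
    using perpD[OF that(2) that(1)] by simp
  thus ?thesis using RR_bot[OF a] bot_perp[of A] by blast
qed

lemma RR_compl2: "A \<in> RR \<Longrightarrow> perp (perp (A \<union> perp A)) = UNIV"
proof -
  assume "A \<in> RR"
  have "perp (A \<union> perp A) = perp A \<inter> perp (perp A)" unfolding perp_def by auto
  also have "\<dots> = {bot}" using RR_compl1[OF RR_perp, of A] by auto
  finally show ?thesis by (simp add: perp_botset)
qed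


definition BB :: "'a::bounded_lattice set set set" where
  "BB = (\<lambda>X. {X}) ` RR"

definition leB :: "'a set set \<Rightarrow> 'a set set \<Rightarrow> bool" where
  "leB P Q \<longleftrightarrow> \<Union>P \<subseteq> \<Union>Q"

lemma BB_elem: "P \<in> BB \<Longrightarrow> P = {\<Union>P} \<and> \<Union>P \<in> RR"
  unfolding BB_def by auto

lemma BB_in: "X \<in> RR \<Longrightarrow> {X} \<in> BB"
  unfolding BB_def by auto

lemma BB_eq: "P \<in> BB \<Longrightarrow> Q \<in> BB \<Longrightarrow> \<Union>P = \<Union>Q \<Longrightarrow> P = Q"
  by (metis BB_elem)

lemma RR_pp: "X \<in> RR \<Longrightarrow> perp (perp X) = X"
  unfolding RR_def by simp

lemma lub_BB:
  assumes T: "T \<subseteq> BB"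
  shows "is_lub_on BB leB T x \<longleftrightarrow> x = {perp (perp (\<Union>(\<Union>T)))}"
proof -
  have L: "is_lub_on BB leB T {perp (perp (\<Union>(\<Union>T)))}"
    unfolding is_lub_on_def
  proof (intro conjI ballI impI)
    show "{perp (perp (\<Union>(\<Union>T)))} \<in> BB" by (rule BB_in) (rule RR_perp)
  next
    fix t assume "t \<in> T"
    thus "leB t {perp (perp (\<Union>(\<Union>T)))}"
      unfolding leB_def using pp_ext[of "\<Union>(\<Union>T)"] by auto
  next
    fix y assume y: "y \<in> BB" "\<forall>t\<in>T. leB t y"
    hence "\<Union>(\<Union>T) \<subseteq> \<Union>y" unfolding leB_def by auto
    hence "perp (perp (\<Union>(\<Union>T))) \<subseteq> perp (perp (\<Union>y))"
      by (intro perp_anti)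
    moreover have "perp (perp (\<Union>y)) = \<Union>y" by (rule RR_pp) (use BB_elem[OF y(1)] in blast)
    ultimately show "leB {perp (perp (\<Union>(\<Union>T)))} y" unfolding leB_def by simp
  qed
  show ?thesis
  proof
    assume x: "is_lub_on BB leB T x"
    have "leB x {perp (perp (\<Union>(\<Union>T)))}" "leB {perp (perp (\<Union>(\<Union>T)))} x"
      using x L unfolding is_lub_on_def by blast+
    thus "x = {perp (perp (\<Union>(\<Union>T)))}"
      using x L unfolding is_lub_on_def leB_def by - (rule BB_eq, auto)
  qed (use L in simp)
qed

lemma glb_BB:
  assumes T: "T \<subseteq> BB"
  shows "is_glb_on BB leB T x \<longleftrightarrow> x = {\<Inter>(Union ` T)}"
proof -
  have TR: "Union ` T \<subseteq> RR" using T BB_elem by blast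
  have L: "is_glb_on BB leB T {\<Inter>(Union ` T)}"
    unfolding is_glb_on_def
  proof (intro conjI ballI impI)
    show "{\<Inter>(Union ` T)} \<in> BB" by (rule BB_in) (rule RR_Inter[OF TR])
  next
    fix t assume "t \<in> T"
    thus "leB {\<Inter>(Union ` T)} t"
      unfolding leB_def by auto
  next
    fix y assume y: "y \<in> BB" "\<forall>t\<in>T. leB y t"
    thus "leB y {\<Inter>(Union ` T)}" unfolding leB_def by auto
  qed
  show ?thesis
  proof
    assume x: "is_glb_on BB leB T x"
    have "leB x {\<Inter>(Union ` T)}" "leB {\<Inter>(Union ` T)} x"
      using x L unfolding is_glb_on_def by blast+
    thus "x = {\<Inter>(Union ` T)}"
      using x L unfolding is_glb_on_def leB_def by - (rule BB_eq, auto)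
  qed (use L in simp)
qed

lemma BB_bot: "(THE z. is_lub_on (BB::'a::bounded_lattice set set set) leB {} z) = {{bot::'a}}"
proof -
  have "is_lub_on BB leB {} x \<longleftrightarrow> x = {{bot::'a}}" for x
    using lub_BB[of "{}" x] by (simp add: perp_empty perp_UNIV)
  thus ?thesis by simp
qed

lemma BB_top: "(THE z. is_glb_on (BB::'a::bounded_lattice set set set) leB {} z) = {UNIV::'a set}"
proof -
  have "is_glb_on BB leB {} x \<longleftrightarrow> x = {UNIV::'a set}" for x
    using glb_BB[of "{}" x] by simp
  thus ?thesis by simp
qed

lemma boolean_BB: "boolean_frame (BB :: 'a::bounded_lattice set set set) leB"
  unfolding boolean_frame_def
proof (intro conjI ballI allI impI)
  fix x :: "'a set set" show "leB x x" unfolding leB_def by simp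
next
  fix x y :: "'a set set" assume "x \<in> BB" "y \<in> BB" "leB x y" "leB y x"
  thus "x = y" unfolding leB_def by - (rule BB_eq, auto)
next
  fix x y z :: "'a set set" assume "leB x y" "leB y z"
  thus "leB x z" unfolding leB_def by auto
next
  fix T :: "'a set set set" assume "T \<subseteq> BB"
  thus "\<exists>s. is_lub_on BB leB T s" using lub_BB by blast
next
  fix a :: "'a set set" and T s m
  assume a: "a \<in> BB" and T: "T \<subseteq> BB" and s: "is_lub_on BB leB T s"
    and m: "is_glb_on BB leB {a, s} m"
  have s': "s = {perp (perp (\<Union>(\<Union>T)))}" using s lub_BB[OF T] by blast
  have sB: "s \<in> BB" using s unfolding is_lub_on_def by blast
  have m': "m = {\<Union>a \<inter> perp (perp (\<Union>(\<Union>T)))}"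
    using m glb_BB[of "{a,s}"] a sB s' by auto
  have C: "{c. \<exists>t\<in>T. is_glb_on BB leB {a, t} c} = (\<lambda>t. {\<Union>a \<inter> \<Union>t}) ` T"
  proof -
    have "is_glb_on BB leB {a, t} c \<longleftrightarrow> c = {\<Union>a \<inter> \<Union>t}" if "t \<in> T" for t c
      using glb_BB[of "{a,t}" c] a T that by auto
    thus ?thesis by auto
  qed
  have CB: "(\<lambda>t. {\<Union>a \<inter> \<Union>t}) ` T \<subseteq> BB"
    using C glb_BB a T unfolding is_glb_on_def by blast
  have AR: "\<Union>a \<in> RR" using BB_elem[OF a] by blast
  have TR: "Union ` T \<subseteq> RR" using T BB_elem by blast
  have e1: "\<Union>(\<Union>T) = \<Union>(Union ` T)" by auto
  have e2: "\<Union>(\<Union>((\<lambda>t. {\<Union>a \<inter> \<Union>t}) ` T)) = \<Union>((\<lambda>X. \<Union>a \<inter> X) ` (Union ` T))" by auto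
  show "is_lub_on BB leB {c. \<exists>t\<in>T. is_glb_on BB leB {a, t} c} m"
    unfolding C lub_BB[OF CB] m' e1 e2 using RR_distrib[OF AR TR] by simp
next
  fix a :: "'a set set" assume a: "a \<in> BB"
  have AR: "\<Union>a \<in> RR" using BB_elem[OF a] by blast
  have cB: "{perp (\<Union>a)} \<in> BB" by (rule BB_in) (rule RR_perp)
  have "is_glb_on BB leB {a, {perp (\<Union>a)}} {{bot}}"
    using glb_BB[of "{a, {perp (\<Union>a)}}"] a cB RR_compl1[OF AR] by auto
  moreover have "is_lub_on BB leB {a, {perp (\<Union>a)}} {UNIV}"
  proof -
    have sub: "{a, {perp (\<Union>a)}} \<subseteq> BB" using a cB by blast
    have e: "\<Union>(\<Union>{a, {perp (\<Union>a)}}) = \<Union>a \<union> perp (\<Union>a)" by auto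
    show ?thesis unfolding lub_BB[OF sub] e RR_compl2[OF AR] by simp
  qed
  ultimately show "\<exists>c\<in>BB. is_glb_on BB leB {a, c} (THE z. is_lub_on BB leB {} z) \<and>
                     is_lub_on BB leB {a, c} (THE z. is_glb_on BB leB {} z)"
    unfolding BB_bot BB_top using cB by blast
qed


lemma DL_iff: "((a::'a::bounded_lattice), b) \<in> DL \<longleftrightarrow> (\<forall>x. inf a x = bot \<longleftrightarrow> inf b x = bot)"
  unfolding DL_def Drel_def by auto

lemma dred_iff: "d_reduced TYPE('a::bounded_lattice) \<longleftrightarrow> (\<forall>a b::'a. (a, b) \<in> DL \<longrightarrow> a = b)"
  unfolding d_reduced_def
proof
  assume "(DL::('a\<times>'a) set) = Id" thus "\<forall>a b::'a. (a, b) \<in> DL \<longrightarrow> a = b" by auto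
next
  assume h: "\<forall>a b::'a. (a, b) \<in> DL \<longrightarrow> a = b"
  show "(DL::('a\<times>'a) set) = Id"
  proof (rule set_eqI)
    fix p :: "'a \<times> 'a"
    show "p \<in> DL \<longleftrightarrow> p \<in> Id" using h by (cases p) (auto simp: DL_iff)
  qed
qed

lemma down_Hk: "{x. x \<le> (a::'a::order)} \<in> Hk k"
  unfolding Hk_def kappa_ideal_def by auto

lemma down_meet_bot: "({y. y \<le> a} \<inter> K = {bot}) \<longleftrightarrow> (bot \<in> K \<and> (\<forall>y\<in>K. inf a y = (bot::'a::bounded_lattice)))"
  if K: "\<forall>x y. x \<in> K \<longrightarrow> y \<le> x \<longrightarrow> y \<in> K"
proof
  assume h: "{y. y \<le> a} \<inter> K = {bot}"
  hence "bot \<in> K" by blast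
  moreover have "inf a y = bot" if "y \<in> K" for y
  proof -
    have "inf a y \<in> K" using K that by (meson inf_le2)
    hence "inf a y \<in> {y. y \<le> a} \<inter> K" by simp
    thus ?thesis using h by blast
  qed
  ultimately show "bot \<in> K \<and> (\<forall>y\<in>K. inf a y = bot)" by blast
next
  assume h: "bot \<in> K \<and> (\<forall>y\<in>K. inf a y = bot)"
  show "{y. y \<le> a} \<inter> K = {bot}"
  proof (rule set_eqI, rule iffI)
    fix y assume "y \<in> {y. y \<le> a} \<inter> K"
    hence "y \<le> a" "inf a y = bot" using h by auto
    hence "y = bot" by (simp add: inf_absorb2)
    thus "y \<in> {bot}" by simp
  qed (use h in auto)
qed

lemma Hk_down: "K \<in> Hk k \<Longrightarrow> \<forall>x y. x \<in> K \<longrightarrow> y \<le> x \<longrightarrow> y \<in> K"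
  unfolding Hk_def kappa_ideal_def by blast

lemma DH_down: "({x. x \<le> a}, {x. x \<le> b}) \<in> DH k \<longleftrightarrow> ((a::'a::bounded_lattice), b) \<in> DL"
proof
  assume h: "({x. x \<le> a}, {x. x \<le> b}) \<in> DH k"
  have "inf a x = bot \<longleftrightarrow> inf b x = bot" for x
  proof -
    have hx: "{y. y \<le> a} \<inter> {y. y \<le> x} = {bot} \<longleftrightarrow> {y. y \<le> b} \<inter> {y. y \<le> x} = {bot}"
    proof -
      have "\<forall>K\<in>Hk k. ({y. y \<le> a} \<inter> K = {bot}) = ({y. y \<le> b} \<inter> K = {bot})"
        using h unfolding DH_def Drel_def by simp
      thus ?thesis using down_Hk[of x k] by (rule bspec)
    qed
    have dc: "\<forall>u v. u \<in> {y. y \<le> x} \<longrightarrow> v \<le> u \<longrightarrow> v \<in> {y. y \<le> x}" by auto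
    have e: "(bot \<in> {y. y \<le> x} \<and> (\<forall>y\<in>{y. y \<le> x}. inf c y = bot)) \<longleftrightarrow> inf c x = bot" for c
    proof
      assume "bot \<in> {y. y \<le> x} \<and> (\<forall>y\<in>{y. y \<le> x}. inf c y = bot)"
      thus "inf c x = bot" by simp
    next
      assume c: "inf c x = bot"
      have "inf c y = bot" if "y \<le> x" for y
      proof -
        have "inf c y \<le> inf c x" using that by (rule inf_mono[OF order_refl])
        thus ?thesis using c by (simp add: le_bot)
      qed
      thus "bot \<in> {y. y \<le> x} \<and> (\<forall>y\<in>{y. y \<le> x}. inf c y = bot)" by simp
    qed
    show ?thesis using hx down_meet_bot[OF dc, of a] down_meet_bot[OF dc, of b] e[of a] e[of b] by simp
  qed
  thus "(a, b) \<in> DL" by (simp add: DL_iff)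
next
  assume h: "(a, b) \<in> DL"
  show "({x. x \<le> a}, {x. x \<le> b}) \<in> DH k"
    unfolding DH_def Drel_def
  proof (clarsimp simp: down_Hk)
    fix K :: "'a set" assume K: "K \<in> Hk k"
    show "({x. x \<le> a} \<inter> K = {bot}) = ({x. x \<le> b} \<inter> K = {bot})"
      using down_meet_bot[OF Hk_down[OF K], of a] down_meet_bot[OF Hk_down[OF K], of b] h
      by (simp add: DL_iff)
  qed
qed

lemma Drel_sym: "(x, y) \<in> Drel C m z \<Longrightarrow> (y, x) \<in> Drel C m z"
  unfolding Drel_def by auto

lemma Drel_trans: "(x, y) \<in> Drel C m z \<Longrightarrow> (y, w) \<in> Drel C m z \<Longrightarrow> (x, w) \<in> Drel C m z"
  unfolding Drel_def by auto

lemma Drel_refl: "x \<in> C \<Longrightarrow> (x, x) \<in> Drel C m z"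
  unfolding Drel_def by auto

lemma gmap_eq: "gmap k a = gmap k b \<longleftrightarrow> ((a::'a::bounded_lattice), b) \<in> DL"
proof -
  have "gmap k a = gmap k b \<longleftrightarrow> ({x. x \<le> a}, {x. x \<le> b}) \<in> DH k"
  proof
    assume e: "gmap k a = gmap k b"
    have "{x. x \<le> b} \<in> gmap k b" unfolding gmap_def DH_def
      by (simp add: Drel_refl down_Hk)
    hence "{x. x \<le> b} \<in> gmap k a" using e by simp
    thus "({x. x \<le> a}, {x. x \<le> b}) \<in> DH k" unfolding gmap_def by simp
  next
    assume h: "({x. x \<le> a}, {x. x \<le> b}) \<in> DH k"
    show "gmap k a = gmap k b" unfolding gmap_def
    proof (rule set_eqI)
      fix J
      have h': "({x. x \<le> b}, {x. x \<le> a}) \<in> DH k" using h unfolding DH_def by (rule Drel_sym)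
      show "J \<in> DH k `` {{x. x \<le> a}} \<longleftrightarrow> J \<in> DH k `` {{x. x \<le> b}}"
      proof
        assume "J \<in> DH k `` {{x. x \<le> a}}"
        hence "({x. x \<le> a}, J) \<in> DH k" by simp
        hence "({x. x \<le> b}, J) \<in> DH k" using h' unfolding DH_def by (rule Drel_trans[rotated])
        thus "J \<in> DH k `` {{x. x \<le> b}}" by simp
      next
        assume "J \<in> DH k `` {{x. x \<le> b}}"
        hence "({x. x \<le> b}, J) \<in> DH k" by simp
        hence "({x. x \<le> a}, J) \<in> DH k" using h unfolding DH_def by (rule Drel_trans[rotated])
        thus "J \<in> DH k `` {{x. x \<le> a}}" by simp
      qed
    qed
  qed
  thus ?thesis using DH_down by blast
qed

lemma part1: "d_reduced TYPE('a::bounded_lattice) \<longleftrightarrow> inj (gmap k :: 'a \<Rightarrow> 'a set set)"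
  unfolding dred_iff inj_def gmap_eq by blast


lemma glb_ex:
  assumes "\<forall>T\<subseteq>B. \<exists>s. is_lub_on B le T s" and "T \<subseteq> B"
  shows "\<exists>m. is_glb_on B le T m"
proof -
  define L where "L = {y\<in>B. \<forall>t\<in>T. le y t}"
  have LB: "L \<subseteq> B" unfolding L_def by blast
  obtain s where s: "is_lub_on B le L s" using assms(1)[rule_format, OF LB] by blast
  have sB: "s \<in> B" and sup: "\<forall>y\<in>L. le y s" and least: "\<forall>y\<in>B. (\<forall>t\<in>L. le t y) \<longrightarrow> le s y"
    using s unfolding is_lub_on_def by simp_all
  have "is_glb_on B le T s"
    unfolding is_glb_on_def
  proof (intro conjI ballI impI)
    show "s \<in> B" by (rule sB)
  next
    fix t assume t: "t \<in> T"
    have "t \<in> B" using t assms(2) by blast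
    moreover have "\<forall>u\<in>L. le u t" using t unfolding L_def by simp
    ultimately show "le s t" using least by simp
  next
    fix y assume "y \<in> B" "\<forall>t\<in>T. le y t"
    hence "y \<in> L" unfolding L_def by simp
    thus "le y s" using sup by simp
  qed
  thus ?thesis by blast
qed

lemma part3_le:
  fixes f :: "'a::bounded_lattice \<Rightarrow> 'b" and a b :: 'a
  assumes bf: "boolean_frame B le" and sk: "sub_kappa_frame k B le S"
    and jg: "join_generates B le S" and bij: "bij_betw f UNIV S"
    and ord: "\<forall>x y. le (f x) (f y) \<longleftrightarrow> x \<le> y"
    and DLab: "(a, b) \<in> DL"
  shows "a \<le> b"
proof (rule ccontr)
  assume nab: "\<not> a \<le> b"
  note bf' = bf[unfolded boolean_frame_def]
  have refl: "\<forall>x\<in>B. le x x" using bf' by (rule conjunct1)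
  have antis: "\<forall>x\<in>B. \<forall>y\<in>B. le x y \<longrightarrow> le y x \<longrightarrow> x = y"
    using bf' by (rule conjunct2[THEN conjunct1])
  have trans: "\<forall>x\<in>B. \<forall>y\<in>B. \<forall>z\<in>B. le x y \<longrightarrow> le y z \<longrightarrow> le x z"
    using bf' by (rule conjunct2[THEN conjunct2, THEN conjunct1])
  have lubex: "\<forall>T\<subseteq>B. \<exists>s. is_lub_on B le T s"
    using bf' by (rule conjunct2[THEN conjunct2, THEN conjunct2, THEN conjunct1])
  have dist: "\<forall>a\<in>B. \<forall>T\<subseteq>B. \<forall>s m. is_lub_on B le T s \<longrightarrow> is_glb_on B le {a, s} m \<longrightarrow>
        is_lub_on B le {c. \<exists>t\<in>T. is_glb_on B le {a, t} c} m"
    using bf' by (rule conjunct2[THEN conjunct2, THEN conjunct2, THEN conjunct2, THEN conjunct1])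
  have compl: "\<forall>a\<in>B. \<exists>c\<in>B. is_glb_on B le {a, c} (THE z. is_lub_on B le {} z) \<and>
                     is_lub_on B le {a, c} (THE z. is_glb_on B le {} z)"
    using bf' by (rule conjunct2[THEN conjunct2, THEN conjunct2, THEN conjunct2, THEN conjunct2])
  have SB: "S \<subseteq> B" using sk unfolding sub_kappa_frame_def by blast
  have S: "S = range f" using bij by (simp add: bij_betw_def)
  have fB: "f x \<in> B" for x using S SB by blast
  have glb_uniq: "is_glb_on B le T m \<Longrightarrow> is_glb_on B le T m' \<Longrightarrow> m = m'" for T m m'
    using antis unfolding is_glb_on_def by blast
  have lub_uniq: "is_lub_on B le T m \<Longrightarrow> is_lub_on B le T m' \<Longrightarrow> m = m'" for T m m'
    using antis unfolding is_lub_on_def by blast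
  obtain z0 where z0: "is_lub_on B le {} z0" using lubex[rule_format, of "{}"] by blast
  have Z0: "(THE z. is_lub_on B le {} z) = z0"
    using z0 lub_uniq by (intro the_equality) blast+
  have z0B: "z0 \<in> B" and z0le: "\<forall>y\<in>B. le z0 y" using z0 unfolding is_lub_on_def by auto
  obtain z1 where z1: "is_glb_on B le {} z1" using glb_ex[OF lubex] by blast
  have Z1: "(THE z. is_glb_on B le {} z) = z1"
    using z1 glb_uniq by (intro the_equality) blast+
  have z1le: "\<forall>y\<in>B. le y z1" using z1 unfolding is_glb_on_def by auto
  have z1B: "z1 \<in> B" using z1 unfolding is_glb_on_def by auto
  define fa where "fa = f a"
  define fb where "fb = f b"
  have faB: "fa \<in> B" and fbB: "fb \<in> B" using fB fa_def fb_def by auto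
  have nle: "\<not> le fa fb" using ord nab fa_def fb_def by simp
  obtain c where cB: "c \<in> B" and c0: "is_glb_on B le {fb, c} z0" and c1: "is_lub_on B le {fb, c} z1"
    using compl fbB unfolding Z0 Z1 by blast
  obtain m where m: "is_glb_on B le {fa, c} m" using glb_ex[OF lubex, of "{fa, c}"] faB cB by blast
  have mB: "m \<in> B" and mfa: "le m fa" and mc: "le m c" using m unfolding is_glb_on_def by auto
  have fa_glb: "is_glb_on B le {fa, z1} fa"
    unfolding is_glb_on_def using faB refl z1le by auto
  have D: "is_lub_on B le {x. \<exists>t\<in>{fb, c}. is_glb_on B le {fa, t} x} fa"
  proof -
    have "{fb, c} \<subseteq> B" using fbB cB by blast
    thus ?thesis using dist[rule_format, OF faB _ c1 fa_glb] by blast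
  qed
  have mnz: "m \<noteq> z0"
  proof
    assume mz: "m = z0"
    have "le x fb" if "x \<in> {x. \<exists>t\<in>{fb, c}. is_glb_on B le {fa, t} x}" for x
    proof -
      from that have "is_glb_on B le {fa, fb} x \<or> is_glb_on B le {fa, c} x" by auto
      thus ?thesis
      proof
        assume "is_glb_on B le {fa, fb} x" thus ?thesis unfolding is_glb_on_def by auto
      next
        assume "is_glb_on B le {fa, c} x"
        hence "x = m" using m glb_uniq by blast
        thus ?thesis using mz z0le fbB by simp
      qed
    qed
    hence "le fa fb" using D fbB unfolding is_lub_on_def by blast
    thus False using nle by simp
  qed
  obtain T where TS: "T \<subseteq> S" and T: "is_lub_on B le T m" using jg[unfolded join_generates_def, rule_format, OF mB] by blast
  obtain t where tT: "t \<in> T" and tnz: "t \<noteq> z0"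
  proof (rule ccontr)
    assume "\<not> thesis"
    hence all0: "\<forall>t\<in>T. t = z0" using that by blast
    hence "le m z0" using T z0B refl unfolding is_lub_on_def by auto
    hence "m = z0" using antis mB z0B z0le by blast
    thus False using mnz by simp
  qed
  obtain x where tx: "t = f x" using tT TS S by blast
  have tB: "t \<in> B" using tx fB by simp
  have tm: "le t m" using T tT unfolding is_lub_on_def by blast
  have "le t fa" using trans tB mB faB tm mfa by blast
  hence xa: "x \<le> a" using ord tx fa_def by simp
  have tc: "le t c" using trans tB mB cB tm mc by blast
  obtain q where q: "is_glb_on B le {f x, fb} q" using glb_ex[OF lubex, of "{f x, fb}"] fB fbB by blast
  have fin: "\<forall>T\<subseteq>S. finite T \<longrightarrow> (\<forall>x. is_glb_on B le T x \<longrightarrow> x \<in> S)"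
    using sk unfolding sub_kappa_frame_def by (rule conjunct2[THEN conjunct1])
  have sub2: "{f x, fb} \<subseteq> S" using S fb_def by blast
  have "q \<in> S" using fin[rule_format, OF sub2 _ q] by simp
  then obtain y where qy: "q = f y" using S by blast
  have qB: "q \<in> B" and qt: "le q (f x)" and qfb: "le q fb" using q unfolding is_glb_on_def by auto
  have qc: "le q c" using trans qB tB cB qt tc tx by blast
  have "le q z0" using c0 qB qfb qc unfolding is_glb_on_def by blast
  hence "le (f y) (f bot)" using trans[rule_format, of "f y" z0 "f bot"] qy z0B fB z0le by simp
  hence y0: "y = bot" using ord by (simp add: le_bot)
  have "le (f (inf x b)) q" using q fB ord fb_def unfolding is_glb_on_def by simp
  hence "inf x b \<le> y" using ord qy by simp
  hence "inf x b = bot" using y0 by (simp add: le_bot)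
  hence "inf b x = bot" by (simp add: inf_commute)
  hence "inf a x = bot" using DLab by (simp add: DL_iff)
  hence "x = bot" using xa by (simp add: inf_absorb2)
  hence "t = q" using tx qy y0 by simp
  hence "t = z0" using \<open>le q z0\<close> z0le qB z0B antis by blast
  thus False using tnz by simp
qed

lemma part3:
  assumes "embeds_in_boolean k TYPE('a::bounded_lattice) (B::'b set) le"
  shows "d_reduced TYPE('a)"
proof -
  obtain S :: "'b set" and f :: "'a \<Rightarrow> 'b" where bf: "boolean_frame B le" and sk: "sub_kappa_frame k B le S"
    and jg: "join_generates B le S" and bij: "bij_betw f UNIV S"
    and ord: "\<forall>x y. le (f x) (f y) \<longleftrightarrow> x \<le> y"
    using assms unfolding embeds_in_boolean_def by blast
  have "a = b" if "(a, b) \<in> DL" for a b :: 'a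
  proof -
    have "(b, a) \<in> DL" using that by (auto simp: DL_iff)
    thus ?thesis using part3_le[OF bf sk jg bij ord that] part3_le[OF bf sk jg bij ord] by (simp add: antisym)
  qed
  thus ?thesis unfolding dred_iff by blast
qed


lemma perp_single: "perp {a} = {y. inf a y = bot}"
  unfolding perp_def by simp

lemma pp_single_mono: "x \<le> y \<Longrightarrow> perp (perp {x}) \<subseteq> perp (perp {y::'a::bounded_lattice})"
proof -
  assume xy: "x \<le> y"
  have "perp {y} \<subseteq> perp {x}"
  proof
    fix z assume "z \<in> perp {y}"
    hence "inf y z = bot" by (simp add: perp_single)
    moreover have "inf x z \<le> inf y z" using xy by (rule inf_mono[OF _ order_refl])
    ultimately have "inf x z = bot" by (simp add: le_bot)
    thus "z \<in> perp {x}" by (simp add: perp_single)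
  qed
  thus ?thesis by (rule perp_anti)
qed

lemma pp_single_perp: "perp (perp (perp {a})) = perp {a}"
  by (rule ppp)

lemma pp_single_DL: "perp (perp {a}) = perp (perp {b}) \<Longrightarrow> (a, b) \<in> DL"
proof -
  assume "perp (perp {a}) = perp (perp {b})"
  hence "perp (perp (perp {a})) = perp (perp (perp {b}))" by simp
  hence e: "perp {a} = perp {b}" by (simp add: ppp)
  have "inf a x = bot \<longleftrightarrow> inf b x = bot" for x
  proof -
    have "x \<in> perp {a} \<longleftrightarrow> x \<in> perp {b}" using e by simp
    thus ?thesis by (simp add: perp_single)
  qed
  thus ?thesis by (simp add: DL_iff)
qed

lemma pp_single_le:
  assumes dr: "d_reduced TYPE('a::bounded_lattice)"
    and h: "perp (perp {x}) \<subseteq> perp (perp {y::'a})"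
  shows "x \<le> y"
proof -
  have "perp (perp (perp {y})) \<subseteq> perp (perp (perp {x}))" using h by (rule perp_anti)
  hence py: "perp {y} \<subseteq> perp {x}" by (simp add: ppp)
  have "inf (inf x y) z = bot \<longleftrightarrow> inf x z = bot" for z
  proof
    assume a: "inf (inf x y) z = bot"
    have "inf y (inf x z) = bot" using a by (simp add: inf_commute inf_left_commute)
    hence "inf x z \<in> perp {x}" using py by (auto simp: perp_single)
    hence "inf x (inf x z) = bot" by (simp add: perp_single)
    thus "inf x z = bot" by simp
  next
    assume a: "inf x z = bot"
    have "inf (inf x y) z \<le> inf x z" by (rule inf_mono) simp_all
    thus "inf (inf x y) z = bot" using a by (simp add: le_bot)
  qed
  hence "(inf x y, x) \<in> DL" by (simp add: DL_iff)
  hence "inf x y = x" using dr by (simp add: dred_iff)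
  thus ?thesis by (metis inf.absorb_iff1)
qed

lemma pp_single_inf: "perp (perp {a}) \<inter> perp (perp {b}) = perp (perp {inf a (b::'a::bounded_lattice)})"
proof
  show "perp (perp {inf a b}) \<subseteq> perp (perp {a}) \<inter> perp (perp {b})"
    using pp_single_mono[of "inf a b" a] pp_single_mono[of "inf a b" b] by simp
next
  show "perp (perp {a}) \<inter> perp (perp {b}) \<subseteq> perp (perp {inf a b})"
  proof
    fix z assume z: "z \<in> perp (perp {a}) \<inter> perp (perp {b})"
    have za: "inf y z = bot" if "inf a y = bot" for y
      using z that by (intro perpD[of z "perp {a}"]) (auto simp: perp_single)
    have zb: "inf y z = bot" if "inf b y = bot" for y
      using z that by (intro perpD[of z "perp {b}"]) (auto simp: perp_single)
    show "z \<in> perp (perp {inf a b})"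
    proof (rule perpI)
      fix y assume "y \<in> perp {inf a b}"
      hence y: "inf (inf a b) y = bot" by (simp add: perp_single)
      have "inf a (inf b y) = bot" using y by (simp add: inf_assoc)
      hence "inf (inf b y) z = bot" by (rule za)
      hence "inf b (inf y z) = bot" by (simp add: inf_assoc)
      hence "inf (inf y z) z = bot" by (rule zb)
      thus "inf y z = bot" by (simp add: inf_assoc)
    qed
  qed
qed

lemma pp_top: "perp (perp {top::'a::bounded_lattice}) = UNIV"
proof -
  have "perp {top::'a} = {bot}" by (auto simp: perp_single)
  thus ?thesis by (simp add: perp_botset)
qed

lemma perp_Union_single: "perp (\<Union> ((\<lambda>a. perp (perp {a})) ` A)) = perp (A::'a::bounded_lattice set)"
proof -
  have "perp (\<Union> ((\<lambda>a. perp (perp {a})) ` A)) = (\<Inter>a\<in>A. perp (perp (perp {a})))"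
    by (simp add: perp_Union image_image)
  also have "\<dots> = (\<Inter>a\<in>A. perp {a})" by (simp add: ppp)
  also have "\<dots> = perp A" unfolding perp_def by auto
  finally show ?thesis .
qed

lemma pp_Union_single: "perp (perp (\<Union> ((\<lambda>a. perp (perp {a})) ` A))) = perp (perp (A::'a::bounded_lattice set))"
  by (simp add: perp_Union_single)

lemma fin_meet:
  fixes f :: "'a::bounded_lattice \<Rightarrow> 'a set set"
  assumes fdef: "\<And>a. f a = {perp (perp {a})}"
  shows "finite T \<Longrightarrow> T \<subseteq> range f \<Longrightarrow> \<exists>c. \<Inter>(Union ` T) = perp (perp {c})"
proof (induction T rule: finite_induct)
  case empty
  have "\<Inter>(Union ` {}) = perp (perp {top::'a})" by (simp add: pp_top)
  thus ?case by (rule exI)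
next
  case (insert t T)
  have "T \<subseteq> range f" using insert.prems by simp
  then obtain c where c: "\<Inter>(Union ` T) = perp (perp {c})" using insert.IH by blast
  have "t \<in> range f" using insert.prems by simp
  then obtain a where a: "t = f a" by blast
  have "\<Inter>(Union ` insert t T) = perp (perp {a}) \<inter> perp (perp {c})"
    using a c fdef by simp
  also have "\<dots> = perp (perp {inf a c})" by (rule pp_single_inf)
  finally show ?case by (rule exI)
qed

lemma kappa_join:
  assumes kf: "kappa_frame k TYPE('a::{bounded_lattice,distrib_lattice})"
    and sm: "small k (A::'a set)"
  shows "\<exists>s. perp A = perp {s}"
proof -
  obtain s where s: "is_lub_on UNIV (\<le>) A s"
    using kf[unfolded kappa_frame_def, THEN conjunct1, rule_format, OF sm] by blast
  have dist: "is_lub_on UNIV (\<le>) ((\<lambda>u. inf y u) ` A) (inf y s)" for y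
    using kf[unfolded kappa_frame_def, THEN conjunct2, rule_format, OF sm s] .
  have "y \<in> perp A \<longleftrightarrow> y \<in> perp {s}" for y
  proof
    assume "y \<in> perp A"
    hence "\<forall>a\<in>A. inf a y = bot" unfolding perp_def by simp
    hence "\<forall>u\<in>(\<lambda>u. inf y u) ` A. u \<le> bot" by (auto simp: inf_commute)
    hence "inf y s \<le> bot" using dist[of y] unfolding is_lub_on_def by blast
    thus "y \<in> perp {s}" by (simp add: perp_single inf_commute le_bot)
  next
    assume "y \<in> perp {s}"
    hence ys: "inf s y = bot" by (simp add: perp_single)
    have "inf a y = bot" if "a \<in> A" for a
    proof -
      have "a \<le> s" using s that unfolding is_lub_on_def by blast
      hence "inf a y \<le> inf s y" by (rule inf_mono[OF _ order_refl])
      thus ?thesis using ys by (simp add: le_bot)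
    qed
    thus "y \<in> perp A" unfolding perp_def by simp
  qed
  thus ?thesis by blast
qed

lemma part2:
  assumes kf: "kappa_frame k TYPE('a::{bounded_lattice,distrib_lattice})"
    and dr: "d_reduced TYPE('a)"
  shows "embeds_in_boolean k TYPE('a) (BB::'a set set set) leB"
proof -
  define f where "f = (\<lambda>a::'a. {perp (perp {a})})"
  have fdef: "\<And>a. f a = {perp (perp {a})}" by (simp add: f_def)
  define S where "S = range f"
  have fBB: "f a \<in> BB" for a unfolding f_def by (rule BB_in) (rule RR_perp)
  have SBB: "S \<subseteq> BB" unfolding S_def using fBB by blast
  have injf: "inj f"
  proof (rule injI)
    fix a b assume "f a = f b"
    hence "perp (perp {a}) = perp (perp {b})" unfolding f_def by simp
    hence "(a, b) \<in> DL" by (rule pp_single_DL)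
    thus "a = b" using dr by (simp add: dred_iff)
  qed
  have bij: "bij_betw f UNIV S" unfolding S_def using injf by (simp add: bij_betw_def)
  have ord: "\<forall>x y. leB (f x) (f y) \<longleftrightarrow> x \<le> y"
    unfolding f_def leB_def using pp_single_le[OF dr] pp_single_mono by (metis cSup_singleton)
  have sk: "sub_kappa_frame k BB leB S"
    unfolding sub_kappa_frame_def
  proof (intro conjI allI impI)
    show "S \<subseteq> BB" by (rule SBB)
  next
    fix T x assume TS: "T \<subseteq> S" and fin: "finite T" and x: "is_glb_on BB leB T x"
    have "x = {\<Inter>(Union ` T)}" using x glb_BB[of T x] TS SBB by blast
    moreover obtain c where "\<Inter>(Union ` T) = perp (perp {c})"
      using fin_meet[OF fdef fin] TS unfolding S_def by blast
    ultimately have "x = f c" by (simp add: f_def)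
    thus "x \<in> S" unfolding S_def by simp
  next
    fix T x assume TS: "T \<subseteq> S" and sm: "small k T" and x: "is_lub_on BB leB T x"
    define A where "A = f -` T"
    have TA: "T = f ` A" using TS unfolding A_def S_def by blast
    have "(card_of A, card_of T) \<in> ordLeq"
    proof -
      have "inj_on f A" using injf by (rule inj_on_subset) simp
      hence "inj_on f A \<and> f ` A \<subseteq> T" using TA by simp
      thus ?thesis using card_of_ordLeq[of A T] by blast
    qed
    hence smA: "small k A" using ordLeq_ordLess_trans[OF _ sm[unfolded small_def]] unfolding small_def by blast
    obtain s where s: "perp A = perp {s}" using kappa_join[OF kf smA] by blast
    have "x = {perp (perp (\<Union>(\<Union>T)))}" using x lub_BB[of T x] TS SBB by blast
    moreover have "\<Union>(\<Union>T) = \<Union> ((\<lambda>a. perp (perp {a})) ` A)" unfolding TA f_def by auto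
    ultimately have "x = {perp (perp A)}" by (simp add: pp_Union_single)
    hence "x = f s" using s by (simp add: f_def)
    thus "x \<in> S" unfolding S_def by simp
  qed
  have jg: "join_generates BB leB S"
    unfolding join_generates_def
  proof
    fix b :: "'a set set" assume b: "b \<in> BB"
    have bb: "b = {\<Union>b} \<and> \<Union>b \<in> RR" by (rule BB_elem[OF b])
    have XR: "\<Union>b \<in> RR" using bb by (rule conjunct2)
    have be: "b = {\<Union>b}" using bb by (rule conjunct1)
    have sub: "f ` (\<Union>b) \<subseteq> S" unfolding S_def by blast
    have "\<Union>(\<Union>(f ` (\<Union>b))) = \<Union> ((\<lambda>a. perp (perp {a})) ` (\<Union>b))" unfolding f_def by auto
    note U = this
    have E: "perp (perp (\<Union>(\<Union>(f ` (\<Union>b))))) = \<Union>b"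
      unfolding U pp_Union_single by (rule RR_pp[OF XR])
    have "b = {perp (perp (\<Union>(\<Union>(f ` (\<Union>b)))))}" unfolding E by (rule be)
    moreover have fTB: "f ` (\<Union>b) \<subseteq> BB" using sub SBB by blast
    ultimately have "is_lub_on BB leB (f ` (\<Union>b)) b"
      using lub_BB[OF fTB, of b] by blast
    thus "\<exists>T\<subseteq>S. is_lub_on BB leB T b" using sub by blast
  qed
  show ?thesis
    unfolding embeds_in_boolean_def using boolean_BB sk jg bij ord by blast
qed

theorem mainTheorem14:
  fixes k :: "'k rel"
  assumes "regular_cardinal k"
    and "kappa_frame k TYPE('a::{bounded_lattice,distrib_lattice})"
  shows "(d_reduced TYPE('a) \<longleftrightarrow> inj (gmap k :: 'a \<Rightarrow> 'a set set))
       \<and> (d_reduced TYPE('a) \<longrightarrow>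
            (\<exists>(B::'a set set set) le. embeds_in_boolean k TYPE('a) B le))
       \<and> (\<forall>(B::'b set) le. embeds_in_boolean k TYPE('a) B le \<longrightarrow> d_reduced TYPE('a))"
proof (intro conjI impI allI)
  show "d_reduced TYPE('a) \<longleftrightarrow> inj (gmap k :: 'a \<Rightarrow> 'a set set)" by (rule part1)
next
  assume "d_reduced TYPE('a)"
  thus "\<exists>(B::'a set set set) le. embeds_in_boolean k TYPE('a) B le"
    using part2[OF assms(2)] by blast
next
  fix B :: "'b set" and le
  assume "embeds_in_boolean k TYPE('a) B le"
  thus "d_reduced TYPE('a)" by (rule part3)
qed

end
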